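(* Let $C_n=[U_n,[U_{n-1},\dots,[U_2,U_1]\dots]]$ be any grade-$n$ nested commutator in which each $U_j$ is either $h\partial_x^2$ or $h^{-1}V(x)$ (with $V$ smooth). Let $O_q=y_q(x)h^q\partial_x^q$ be an observable with $y_q$ smooth, so that $\mathrm{ht}(O_q)=\mathrm{wd}(O_q)=q$. Then $$\mathrm{ht}([C_n,O_q])\le\mathrm{wd}([C_n,O_q]).$$
   Context: $\mathcal{L}_h$ is the set of differential operators $\sum_{k=0}^n y_k(x)h^{m_k}\partial_x^{d_k}$ ($n,d_k\in\mathbb{N}$, $m_k\in\mathbb{Z}$, $y_k$ smooth). For $P\in\mathcal{L}_h$: $\mathrm{ht}(P)=\max\{d: h^m\partial_x^d\text{ appears in }P\}$, $\mathrm{wd}(P)=\min\{m: h^m\partial_x^d\text{ appears in }P\}$, with $\mathrm{ht}(0)=0$, $\mathrm{wd}(0)=\infty$. *)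

theory Defs
  imports "HOL-Analysis.Analysis"
begin

definition smooth :: "(real \<Rightarrow> real) \<Rightarrow> bool" where
  "smooth f \<longleftrightarrow> (\<forall>k x. ((deriv ^^ k) f) differentiable (at x))"

text \<open>An operator in L_h is a finite sum of terms y(x) h^m d_x^d, represented as a list of
  triples (y, m, d). h is a formal (commuting) parameter.\<close>
type_synonym hterm = "(real \<Rightarrow> real) \<times> int \<times> nat"
type_synonym hop = "hterm list"

definition hcoeff :: "hop \<Rightarrow> int \<Rightarrow> nat \<Rightarrow> real \<Rightarrow> real" where
  "hcoeff P m d = (\<lambda>x. sum_list (map (\<lambda>(y, m', d'). if m' = m \<and> d' = d then y x else 0) P))"

definition appears :: "hop \<Rightarrow> int \<Rightarrow> nat \<Rightarrow> bool" where
  "appears P m d \<longleftrightarrow> hcoeff P m d \<noteq> (\<lambda>x. 0)"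

definition ht :: "hop \<Rightarrow> nat" where
  "ht P = (if \<exists>m d. appears P m d then Max {d. \<exists>m. appears P m d} else 0)"

definition wd :: "hop \<Rightarrow> ereal" where
  "wd P = (if \<exists>m d. appears P m d then ereal (of_int (Min {m. \<exists>d. appears P m d})) else \<infinity>)"

text \<open>Composition via the Leibniz rule:
  a h^m1 d^d1 o b h^m2 d^d2 = sum_j (d1 choose j) a b^(j) h^(m1+m2) d^(d1-j+d2).\<close>
definition term_comp :: "hterm \<Rightarrow> hterm \<Rightarrow> hop" where
  "term_comp s t = (case s of (a, m1, d1) \<Rightarrow> case t of (b, m2, d2) \<Rightarrow>
     map (\<lambda>j. (\<lambda>x. of_nat (d1 choose j) * a x * (deriv ^^ j) b x, m1 + m2, d1 - j + d2)) [0..<Suc d1])"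

definition op_comp :: "hop \<Rightarrow> hop \<Rightarrow> hop" where
  "op_comp P Q = concat [term_comp s t. s \<leftarrow> P, t \<leftarrow> Q]"

definition op_neg :: "hop \<Rightarrow> hop" where
  "op_neg P = map (\<lambda>(a, m, d). (\<lambda>x. - a x, m, d)) P"

definition comm :: "hop \<Rightarrow> hop \<Rightarrow> hop" where
  "comm P Q = op_comp P Q @ op_neg (op_comp Q P)"

definition gen :: "(real \<Rightarrow> real) \<Rightarrow> bool \<Rightarrow> hop" where
  "gen V b = (if b then [(\<lambda>x. 1, 1, 2)] else [(V, -1, 0)])"

text \<open>Nested commutator [U_n,[U_{n-1},...,[U_2,U_1]...]] for the list [U_n,...,U_1].\<close>
fun nested :: "(real \<Rightarrow> real) \<Rightarrow> bool list \<Rightarrow> hop" where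
  "nested V [] = []"
| "nested V [b] = gen V b"
| "nested V (b # bs) = comm (gen V b) (nested V bs)"

definition obs :: "(real \<Rightarrow> real) \<Rightarrow> nat \<Rightarrow> hop" where
  "obs y q = [(y, int q, q)]"

end

theory Submission
  imports Defs
begin


lemma rdiff_fd: "(f::real\<Rightarrow>real) differentiable at x \<Longrightarrow> f field_differentiable at x"
  by (simp add: field_differentiable_def real_differentiable_def)

lemma funpow_deriv_Suc: "(deriv^^Suc k) f = (deriv^^k) (deriv f)"
  by (simp only: funpow_Suc_right o_def)

lemma smooth_diff: "smooth f \<Longrightarrow> f differentiable at x"
  unfolding smooth_def by (metis funpow_0)

lemma smooth_deriv: "smooth f \<Longrightarrow> smooth (deriv f)"
  unfolding smooth_def by (metis funpow_deriv_Suc)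

lemma smooth_funpow: "smooth f \<Longrightarrow> smooth ((deriv^^j) f)"
  by (induction j) (auto intro: smooth_deriv)

lemma deriv_add_k:
  fixes f g :: "real \<Rightarrow> real"
  shows
  "(\<forall>i<k. \<forall>x. (deriv^^i) f differentiable at x) \<Longrightarrow> (\<forall>i<k. \<forall>x. (deriv^^i) g differentiable at x) \<Longrightarrow>
   (deriv^^k) (\<lambda>x. f x + g x) = (\<lambda>x. (deriv^^k) f x + (deriv^^k) g x)"
proof (induction k arbitrary: f g)
  case 0 then show ?case by simp
next
  case (Suc k)
  have fd: "\<And>x. f differentiable at x" and gd: "\<And>x. g differentiable at x"
    using Suc.prems by (metis funpow_0 zero_less_Suc)+
  have "deriv (\<lambda>x. f x + g x) = (\<lambda>x. deriv f x + deriv g x)"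
    using fd gd by (intro ext deriv_add rdiff_fd) (auto intro: rdiff_fd)
  moreover have "(\<forall>i<k. \<forall>x. (deriv^^i) (deriv f) differentiable at x)"
    "(\<forall>i<k. \<forall>x. (deriv^^i) (deriv g) differentiable at x)"
    using Suc.prems by (metis funpow_deriv_Suc Suc_mono)+
  ultimately show ?case using Suc.IH by (simp only: funpow_deriv_Suc)
qed

lemma deriv_add_smooth: "smooth f \<Longrightarrow> smooth g \<Longrightarrow>
   (deriv^^k) (\<lambda>x. f x + g x) = (\<lambda>x. (deriv^^k) f x + (deriv^^k) g x)"
  by (rule deriv_add_k) (auto simp: smooth_def)

lemma smooth_add: "smooth f \<Longrightarrow> smooth g \<Longrightarrow> smooth (\<lambda>x. f x + g x)"
  apply (subst smooth_def)
  apply (simp only: deriv_add_smooth)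
  apply (auto intro!: differentiable_add simp: smooth_def)
  done

lemma deriv_const_Suc: "(deriv^^Suc k) (\<lambda>x. c) = (\<lambda>x. 0)"
  by (induction k) (auto simp: deriv_const)

lemma deriv_zero_k: "(deriv^^k) (\<lambda>x. 0::real) = (\<lambda>x. 0)"
  by (cases k) (simp, metis deriv_const_Suc)

lemma smooth_const: "smooth (\<lambda>x. c)"
  unfolding smooth_def
proof (intro allI)
  fix k x show "(deriv ^^ k) (\<lambda>x. c) differentiable at x"
    by (cases k) (simp_all only: funpow_0 deriv_const_Suc differentiable_const)
qed

lemma smooth_mult_aux:
  "\<forall>f g. smooth f \<longrightarrow> smooth g \<longrightarrow> (\<forall>x. (deriv^^k) (\<lambda>x. f x * g x) differentiable at x)"
proof (induction k rule: less_induct)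
  case (less k)
  show ?case
  proof (cases k)
    case 0 then show ?thesis by (auto intro: differentiable_mult smooth_diff)
  next
    case (Suc k')
    show ?thesis
    proof (intro allI impI)
      fix f g x assume f: "smooth f" and g: "smooth g"
      have e: "deriv (\<lambda>x. f x * g x) = (\<lambda>x. deriv f x * g x + f x * deriv g x)"
        using f g by (auto intro!: ext simp: deriv_mult rdiff_fd smooth_diff)
      have s1: "\<forall>i<k'. \<forall>x. (deriv^^i) (\<lambda>x. deriv f x * g x) differentiable at x"
        using less.IH Suc f g smooth_deriv by simp
      have s2: "\<forall>i<k'. \<forall>x. (deriv^^i) (\<lambda>x. f x * deriv g x) differentiable at x"
        using less.IH Suc f g smooth_deriv by simp
      have "(deriv^^k) (\<lambda>x. f x * g x) = (\<lambda>x. (deriv^^k') (\<lambda>x. deriv f x * g x) x + (deriv^^k') (\<lambda>x. f x * deriv g x) x)"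
        unfolding Suc funpow_deriv_Suc e using deriv_add_k[OF s1 s2] .
      moreover have "(deriv^^k') (\<lambda>x. deriv f x * g x) differentiable at x"
        "(deriv^^k') (\<lambda>x. f x * deriv g x) differentiable at x"
        using less.IH Suc f g smooth_deriv by simp_all
      ultimately show "(deriv^^k) (\<lambda>x. f x * g x) differentiable at x"
        by (simp add: differentiable_add)
    qed
  qed
qed

lemma smooth_mult: "smooth f \<Longrightarrow> smooth g \<Longrightarrow> smooth (\<lambda>x. f x * g x)"
  using smooth_mult_aux unfolding smooth_def by blast

lemma smooth_neg: "smooth f \<Longrightarrow> smooth (\<lambda>x. - f x)"
  using smooth_mult[OF smooth_const[of "-1"]] by simp

lemma smooth_if: "smooth f \<Longrightarrow> smooth (\<lambda>x. if P then f x else 0)"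
  by (cases P) (auto simp: smooth_const)

lemma deriv_if: "(deriv^^k) (\<lambda>x. if P then (f::real\<Rightarrow>real) x else 0) = (if P then (deriv^^k) f else (\<lambda>x. 0))"
  by (cases P) (auto simp: deriv_zero_k)


lemma hcoeff_Nil[simp]: "hcoeff [] m d = (\<lambda>x. 0)"
  by (simp add: hcoeff_def)

lemma hcoeff_Nil_app[simp]: "hcoeff [] m d x = 0"
  by (simp add: hcoeff_def)

lemma hcoeff_Cons: "hcoeff ((a,m',d')#P) m d = (\<lambda>x. (if m' = m \<and> d' = d then a x else 0) + hcoeff P m d x)"
  by (simp add: hcoeff_def)

lemma hcoeff_append: "hcoeff (P @ Q) m d x = hcoeff P m d x + hcoeff Q m d x"
  by (simp add: hcoeff_def)

lemma hcoeff_neg: "hcoeff (op_neg P) m d x = - hcoeff P m d x"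
  by (induction P) (auto simp: hcoeff_def op_neg_def)

lemma hcoeff_comm: "hcoeff (comm P Q) m d x = hcoeff (op_comp P Q) m d x - hcoeff (op_comp Q P) m d x"
  by (simp add: comm_def hcoeff_append hcoeff_neg)

lemma op_comp_single_Cons: "op_comp [s] (t#C) = term_comp s t @ op_comp [s] C"
  by (simp add: op_comp_def)

lemma op_comp_Cons_single: "op_comp (s#C) [t] = term_comp s t @ op_comp C [t]"
  by (simp add: op_comp_def)

lemma op_comp_Nil1[simp]: "op_comp [] Q = []" by (simp add: op_comp_def)
lemma op_comp_Nil2[simp]: "op_comp P [] = []" by (induction P) (auto simp: op_comp_def)

lemma hcoeff_term_comp: "hcoeff (term_comp (a,m1,d1) (b,m2,d2)) m d x =
  (\<Sum>j<Suc d1. if m1 + m2 = m \<and> d1 - j + d2 = d then of_nat (d1 choose j) * a x * (deriv^^j) b x else 0)"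
  by (simp add: hcoeff_def term_comp_def interv_sum_list_conv_sum_set_nat o_def lessThan_atLeast0)

lemma smooth_hcoeff: "\<forall>s\<in>set C. smooth (fst s) \<Longrightarrow> smooth (hcoeff C m d)"
proof (induction C)
  case Nil then show ?case by (simp add: smooth_const)
next
  case (Cons s C) then show ?case
    by (cases s) (auto simp: hcoeff_Cons intro!: smooth_add smooth_if)
qed

lemma hcoeff_L:
  assumes "\<forall>t\<in>set C. smooth (fst t)"
  shows "hcoeff (op_comp [(a,m1,d1)] C) m d x = (\<Sum>j<Suc d1. if d1 \<le> d + j then
      of_nat (d1 choose j) * a x * (deriv^^j) (hcoeff C (m-m1) (d+j-d1)) x else 0)"
  using assms
proof (induction C)
  case Nil then show ?case by (simp add: deriv_zero_k cong: if_cong)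
next
  case (Cons t C)
  obtain b m2 d2 where t: "t = (b,m2,d2)" by (cases t)
  have sb: "smooth b" using Cons.prems t by auto
  have sC: "\<forall>t\<in>set C. smooth (fst t)" using Cons.prems by auto
  have e: "\<And>j. (deriv^^j) (hcoeff (t#C) (m-m1) (d+j-d1)) x =
     (if m2 = m - m1 \<and> d2 = d+j-d1 then (deriv^^j) b x else 0) + (deriv^^j) (hcoeff C (m-m1) (d+j-d1)) x"
    unfolding t hcoeff_Cons
    by (subst deriv_add_smooth) (auto simp: deriv_if deriv_zero_k sb smooth_if smooth_hcoeff[OF sC])
  have "hcoeff (op_comp [(a,m1,d1)] (t#C)) m d x = hcoeff (term_comp (a,m1,d1) t) m d x + hcoeff (op_comp [(a,m1,d1)] C) m d x"
    by (simp add: op_comp_single_Cons hcoeff_append)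
  also have "\<dots> = (\<Sum>j<Suc d1. (if m1 + m2 = m \<and> d1 - j + d2 = d then of_nat (d1 choose j) * a x * (deriv^^j) b x else 0)
     + (if d1 \<le> d + j then of_nat (d1 choose j) * a x * (deriv^^j) (hcoeff C (m-m1) (d+j-d1)) x else 0))"
    unfolding t hcoeff_term_comp Cons.IH[OF sC] by (simp add: sum.distrib)
  also have "\<dots> = (\<Sum>j<Suc d1. if d1 \<le> d + j then
      of_nat (d1 choose j) * a x * (deriv^^j) (hcoeff (t#C) (m-m1) (d+j-d1)) x else 0)"
    unfolding e
    by (rule sum.cong) (auto simp: algebra_simps)
  finally show ?case .
qed

lemma hcoeff_R:
  assumes "\<forall>s\<in>set C. snd (snd s) < N"
  shows "hcoeff (op_comp C [(b,m2,d2)]) m d x = (\<Sum>d1<N. \<Sum>j<Suc d1. if d1 - j + d2 = d then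
      of_nat (d1 choose j) * hcoeff C (m-m2) d1 x * (deriv^^j) b x else 0)"
  using assms
proof (induction C)
  case Nil then show ?case by (simp cong: if_cong)
next
  case (Cons s C)
  obtain a m1 d1' where s: "s = (a,m1,d1')" by (cases s)
  have lt: "d1' < N" using Cons.prems s by auto
  have IH: "hcoeff (op_comp C [(b,m2,d2)]) m d x = (\<Sum>d1<N. \<Sum>j<Suc d1. if d1 - j + d2 = d then
      of_nat (d1 choose j) * hcoeff C (m-m2) d1 x * (deriv^^j) b x else 0)"
    using Cons by auto
  define G where "G d1 = (\<Sum>j<Suc d1. if d1 - j + d2 = d then
      of_nat (d1 choose j) * (if m1 = m - m2 then a x else 0) * (deriv^^j) b x else 0)" for d1
  have "hcoeff (op_comp (s#C) [(b,m2,d2)]) m d x = hcoeff (term_comp s (b,m2,d2)) m d x + hcoeff (op_comp C [(b,m2,d2)]) m d x"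
    by (simp add: op_comp_Cons_single hcoeff_append)
  also have "hcoeff (term_comp s (b,m2,d2)) m d x = G d1'"
    unfolding s hcoeff_term_comp G_def by (rule sum.cong) auto
  also have "G d1' = (\<Sum>d1<N. if d1' = d1 then G d1 else 0)"
    using lt by (simp add: sum.delta)
  also have "\<dots> + hcoeff (op_comp C [(b,m2,d2)]) m d x = (\<Sum>d1<N. \<Sum>j<Suc d1. if d1 - j + d2 = d then
      of_nat (d1 choose j) * hcoeff (s#C) (m-m2) d1 x * (deriv^^j) b x else 0)"
    unfolding IH s hcoeff_Cons G_def sum.distrib[symmetric]
    apply (rule sum.cong, simp)
    subgoal for d1 by (cases "d1' = d1") (auto simp: sum.distrib[symmetric] algebra_simps intro!: sum.cong)
    done
  finally show ?case .
qed



definition hom :: "int \<Rightarrow> hop \<Rightarrow> bool" where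
  "hom k C \<longleftrightarrow> (\<forall>s\<in>set C. fst (snd s) = k \<and> smooth (fst s))"

definition ordb :: "int \<Rightarrow> hop \<Rightarrow> bool" where
  "ordb k C \<longleftrightarrow> (\<forall>d. k + 1 < int d \<longrightarrow> hcoeff C k d = (\<lambda>x. 0))"

lemma hom_other: "hom k C \<Longrightarrow> m \<noteq> k \<Longrightarrow> hcoeff C m d = (\<lambda>x. 0)"
proof (induction C)
  case Nil then show ?case by simp
next
  case (Cons s C) then show ?case by (cases s) (auto simp: hom_def hcoeff_Cons)
qed

lemma hom_smooth: "hom k C \<Longrightarrow> \<forall>s\<in>set C. smooth (fst s)"
  by (auto simp: hom_def)

lemma set_term_comp: "s' \<in> set (term_comp (a,m1,d1) (b,m2,d2)) \<Longrightarrow> smooth a \<Longrightarrow> smooth b \<Longrightarrow>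
   fst (snd s') = m1 + m2 \<and> smooth (fst s')"
  by (auto simp: term_comp_def intro!: smooth_mult smooth_const smooth_funpow)

lemma hom_op_comp: "hom k1 P \<Longrightarrow> hom k2 Q \<Longrightarrow> hom (k1 + k2) (op_comp P Q)"
proof -
  assume P: "hom k1 P" and Q: "hom k2 Q"
  have "fst (snd s') = k1 + k2 \<and> smooth (fst s')" if "s' \<in> set (op_comp P Q)" for s'
  proof -
    have "\<exists>s\<in>set P. \<exists>t\<in>set Q. s' \<in> set (term_comp s t)"
      using that by (simp add: op_comp_def)
    then obtain s t where st: "s \<in> set P" "t \<in> set Q" "s' \<in> set (term_comp s t)"
      by blast
    obtain a m1 d1 b m2 d2 where s: "s = (a,m1,d1)" and t: "t = (b,m2,d2)" by (cases s, cases t)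
    have h: "smooth a" "smooth b" "m1 = k1" "m2 = k2" using st(1,2) P Q unfolding s t hom_def by force+
    show ?thesis using set_term_comp[of s' a m1 d1 b m2 d2] st(3) h unfolding s t by auto
  qed
  then show ?thesis by (auto simp: hom_def)
qed

lemma hom_neg: "hom k P \<Longrightarrow> hom k (op_neg P)"
  by (auto simp: hom_def op_neg_def intro!: smooth_neg)

lemma hom_append: "hom k (A @ B) \<longleftrightarrow> hom k A \<and> hom k B"
  unfolding hom_def by auto

lemma hom_comm: "hom k1 P \<Longrightarrow> hom k2 Q \<Longrightarrow> hom (k1 + k2) (comm P Q)"
proof -
  assume P: "hom k1 P" and Q: "hom k2 Q"
  have "hom (k2 + k1) (op_comp Q P)" using hom_op_comp[OF Q P] .
  then have "hom (k1 + k2) (op_neg (op_comp Q P))" using hom_neg by (simp add: add.commute)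
  then show ?thesis unfolding comm_def hom_append using hom_op_comp[OF P Q] by simp
qed

lemma exN: "\<exists>N. (\<forall>s\<in>set C. snd (snd s) < N) \<and> (d::nat) < N"
proof -
  have "\<forall>s\<in>set C. snd (snd s) < Suc (sum_list (map (snd \<circ> snd) C) + d)"
  proof
    fix s assume "s \<in> set C"
    then have "(snd \<circ> snd) s \<in> set (map (snd \<circ> snd) C)" by simp
    from member_le_sum_list[OF this] show "snd (snd s) < Suc (sum_list (map (snd \<circ> snd) C) + d)" by simp
  qed
  then show ?thesis by (intro exI[of _ "Suc (sum_list (map (snd \<circ> snd) C) + d)"]) auto
qed

lemma sumR:
  assumes "\<forall>d1 j. j < d1 \<longrightarrow> d1 - Suc j + d2 = d \<longrightarrow> c d1 x = 0" and "d < N"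
  shows "(\<Sum>d1<N. \<Sum>j<Suc d1. if d1 - j + d2 = d then of_nat (d1 choose j) * c d1 x * (deriv^^j) b x else 0)
     = (if d2 \<le> d then c (d - d2) x * b x else (0::real))"
proof -
  have inner: "(\<Sum>j<Suc d1. if d1 - j + d2 = d then of_nat (d1 choose j) * c d1 x * (deriv^^j) b x else 0)
     = (if d1 = d - d2 \<and> d2 \<le> d then c d1 x * b x else 0)" for d1
  proof -
    have "(\<Sum>j<d1. if d1 - Suc j + d2 = d then of_nat (d1 choose Suc j) * c d1 x * (deriv^^Suc j) b x else 0) = 0"
    proof (intro sum.neutral ballI)
      fix j assume "j \<in> {..<d1}"
      then show "(if d1 - Suc j + d2 = d then of_nat (d1 choose Suc j) * c d1 x * (deriv^^Suc j) b x else 0) = 0"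
        using assms(1)[rule_format, of j d1] by simp
    qed
    moreover have "(d1 - 0 + d2 = d) = (d1 = d - d2 \<and> d2 \<le> d)" by arith
    ultimately show ?thesis by (subst sum.lessThan_Suc_shift) simp
  qed
  have "(\<Sum>d1<N. if d1 = d - d2 \<and> d2 \<le> d then c d1 x * b x else 0) = (if d2 \<le> d then c (d-d2) x * b x else 0)"
  proof (cases "d2 \<le> d")
    case True then show ?thesis using assms(2) by (simp add: sum.delta)
  next
    case False then show ?thesis by simp
  qed
  then show ?thesis by (simp only: inner)
qed

lemma sumL:
  assumes "\<forall>j<d1. d1 \<le> d + Suc j \<longrightarrow> c (d + Suc j - d1) = (\<lambda>x. 0)"
  shows "(\<Sum>j<Suc d1. if d1 \<le> d + j then of_nat (d1 choose j) * a x * (deriv^^j) (c (d+j-d1)) x else 0)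
     = (if d1 \<le> d then a x * c (d - d1) x else (0::real))"
proof -
  have "(\<Sum>j<d1. if d1 \<le> d + Suc j then of_nat (d1 choose Suc j) * a x * (deriv^^Suc j) (c (d+Suc j-d1)) x else 0) = 0"
  proof (intro sum.neutral ballI)
    fix j assume "j \<in> {..<d1}"
    then have "d1 \<le> d + Suc j \<Longrightarrow> (deriv^^Suc j) (c (d+Suc j-d1)) x = 0"
      using assms by (simp add: deriv_zero_k del: funpow.simps)
    then show "(if d1 \<le> d + Suc j then of_nat (d1 choose Suc j) * a x * (deriv^^Suc j) (c (d+Suc j-d1)) x else 0) = 0"
      by simp
  qed
  then show ?thesis by (subst sum.lessThan_Suc_shift) simp
qed



lemma ordb_T:
  assumes H: "hom k C" and O: "ordb k C"
  shows "ordb (1+k) (comm [(\<lambda>x. 1, 1, 2)] C)"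
  unfolding ordb_def
proof (intro allI impI ext)
  fix d x assume dk: "1 + k + 1 < int d"
  obtain N where N: "\<forall>s\<in>set C. snd (snd s) < N" "d < N" using exN by blast
  have sm: "\<forall>t\<in>set C. smooth (fst t)" using hom_smooth[OF H] .
  have e: "1 + k - 1 = k" by simp
  have z: "hcoeff C k d' = (\<lambda>x. 0)" if "k + 1 < int d'" for d' using O that unfolding ordb_def by blast
  have A: "hcoeff (op_comp [(\<lambda>x. 1, 1, 2)] C) (1+k) d x = (if 2 \<le> d then 1 * hcoeff C k (d-2) x else 0)"
    unfolding hcoeff_L[OF sm, of "\<lambda>x. 1" 1 2 "1+k" d x, unfolded e]
    by (rule sumL) (use dk z in auto)
  have B: "hcoeff (op_comp C [(\<lambda>x. 1, 1, 2)]) (1+k) d x = (if 2 \<le> d then hcoeff C k (d-2) x * 1 else 0)"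
    unfolding hcoeff_R[OF N(1), of "\<lambda>x. 1" 1 2 "1+k" d x, unfolded e]
  proof (rule sumR[OF _ N(2)], intro allI impI)
    fix d1 j assume "j < d1" "d1 - Suc j + 2 = d"
    then have "k + 1 < int d1" using dk by linarith
    then show "hcoeff C k d1 x = 0" using z by simp
  qed
  show "hcoeff (comm [(\<lambda>x. 1, 1, 2)] C) (1 + k) d x = 0"
    unfolding hcoeff_comm A B by simp
qed

lemma ordb_F:
  assumes H: "hom k C" and O: "ordb k C" and V: "smooth V"
  shows "ordb (-1+k) (comm [(V, -1, 0)] C)"
  unfolding ordb_def
proof (intro allI impI ext)
  fix d x assume dk: "-1 + k + 1 < int d"
  obtain N where N: "\<forall>s\<in>set C. snd (snd s) < N" "d < N" using exN by blast
  have sm: "\<forall>t\<in>set C. smooth (fst t)" using hom_smooth[OF H] .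
  have e: "-1 + k - -1 = k" by simp
  have z: "hcoeff C k d' = (\<lambda>x. 0)" if "k + 1 < int d'" for d' using O that unfolding ordb_def by blast
  have A: "hcoeff (op_comp [(V, -1, 0)] C) (-1+k) d x = (if 0 \<le> d then V x * hcoeff C k (d-0) x else 0)"
    unfolding hcoeff_L[OF sm, of V "-1" 0 "-1+k" d x, unfolded e]
    by (rule sumL) auto
  have B: "hcoeff (op_comp C [(V, -1, 0)]) (-1+k) d x = (if 0 \<le> d then hcoeff C k (d-0) x * V x else 0)"
    unfolding hcoeff_R[OF N(1), of V "-1" 0 "-1+k" d x, unfolded e]
  proof (rule sumR[OF _ N(2)], intro allI impI)
    fix d1 j assume "j < d1" "d1 - Suc j + 0 = d"
    then have "k + 1 < int d1" using dk by linarith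
    then show "hcoeff C k d1 x = 0" using z by simp
  qed
  show "hcoeff (comm [(V, -1, 0)] C) (-1 + k) d x = 0"
    unfolding hcoeff_comm A B by simp
qed

lemma ordb_O:
  assumes H: "hom k C" and O: "ordb k C" and Y: "smooth y" and dk: "k + int q < int d"
  shows "hcoeff (comm C [(y, int q, q)]) (k + int q) d x = 0"
proof -
  obtain N where N: "\<forall>s\<in>set C. snd (snd s) < N" "d < N" using exN by blast
  have sm: "\<forall>t\<in>set C. smooth (fst t)" using hom_smooth[OF H] .
  have e: "k + int q - int q = k" by simp
  have z: "hcoeff C k d' = (\<lambda>x. 0)" if "k + 1 < int d'" for d' using O that unfolding ordb_def by blast
  have B: "hcoeff (op_comp [(y, int q, q)] C) (k + int q) d x = (if q \<le> d then y x * hcoeff C k (d-q) x else 0)"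
    unfolding hcoeff_L[OF sm, of y "int q" q "k + int q" d x, unfolded e]
  proof (rule sumL, intro allI impI)
    fix j assume "j < q" "q \<le> d + Suc j"
    then have "k + 1 < int (d + Suc j - q)" using dk by linarith
    then show "hcoeff C k (d + Suc j - q) = (\<lambda>x. 0)" using z by simp
  qed
  have A: "hcoeff (op_comp C [(y, int q, q)]) (k + int q) d x = (if q \<le> d then hcoeff C k (d-q) x * y x else 0)"
    unfolding hcoeff_R[OF N(1), of y "int q" q "k + int q" d x, unfolded e]
  proof (rule sumR[OF _ N(2)], intro allI impI)
    fix d1 j assume "j < d1" "d1 - Suc j + q = d"
    then have "k + 1 < int d1" using dk by linarith
    then show "hcoeff C k d1 x = 0" using z by simp
  qed
  show ?thesis unfolding hcoeff_comm A B by simp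
qed

lemma nested_inv: "smooth V \<Longrightarrow> bs \<noteq> [] \<Longrightarrow> \<exists>k. hom k (nested V bs) \<and> ordb k (nested V bs)"
proof (induction V bs rule: nested.induct)
  case 1 then show ?case by simp
next
  case (2 V b) show ?case
  proof (cases b)
    case True
    have "hom 1 (nested V [b]) \<and> ordb 1 (nested V [b])"
      using True by (auto simp: gen_def hom_def ordb_def hcoeff_Cons smooth_const)
    then show ?thesis by blast
  next
    case False
    have "hom (-1) (nested V [b]) \<and> ordb (-1) (nested V [b])"
      using False 2 by (auto simp: gen_def hom_def ordb_def hcoeff_Cons)
    then show ?thesis by blast
  qed
next
  case (3 V b v vs)
  then obtain k where k: "hom k (nested V (v # vs))" "ordb k (nested V (v # vs))" by auto
  show ?case
  proof (cases b)
    case True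
    have g: "hom 1 [(\<lambda>x. 1, 1, 2)]" by (auto simp: hom_def smooth_const)
    have "hom (1+k) (nested V (b # v # vs)) \<and> ordb (1+k) (nested V (b # v # vs))"
      using True hom_comm[OF g k(1)] ordb_T[OF k] by (simp add: gen_def)
    then show ?thesis by blast
  next
    case False
    have g: "hom (-1) [(V, -1, 0)]" using 3 by (auto simp: hom_def)
    have "hom (-1+k) (nested V (b # v # vs)) \<and> ordb (-1+k) (nested V (b # v # vs))"
      using False hom_comm[OF g k(1)] ordb_F[OF k] 3 by (simp add: gen_def)
    then show ?thesis by blast
  qed
qed



theorem lemma4p2:
  fixes V y :: "real \<Rightarrow> real" and bs :: "bool list" and q :: nat
  assumes "smooth V" and "smooth y" and "bs \<noteq> []"
  shows "ereal (real (ht (comm (nested V bs) (obs y q)))) \<le> wd (comm (nested V bs) (obs y q))"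
proof -
  obtain k where k: "hom k (nested V bs)" "ordb k (nested V bs)"
    using nested_inv[OF assms(1,3)] by blast
  define P where "P = comm (nested V bs) (obs y q)"
  have g: "hom (int q) [(y, int q, q)]" using assms(2) by (auto simp: hom_def)
  have hP: "hom (k + int q) P" unfolding P_def obs_def using hom_comm[OF k(1) g] .
  have zP: "hcoeff P (k + int q) d = (\<lambda>x. 0)" if "k + int q < int d" for d
    unfolding P_def obs_def using ordb_O[OF k assms(2) that] by (intro ext)
  have apD: "m = k + int q \<and> int d \<le> k + int q" if "appears P m d" for m d
  proof (rule ccontr)
    assume "\<not> (m = k + int q \<and> int d \<le> k + int q)"
    then have "hcoeff P m d = (\<lambda>x. 0)"
      using hom_other[OF hP] zP by (cases "m = k + int q") auto
    then show False using that by (simp add: appears_def)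
  qed
  show ?thesis
  proof (cases "\<exists>m d. appears P m d")
    case False
    then show ?thesis unfolding P_def[symmetric] wd_def by auto
  next
    case True
    then obtain m0 d0 where a0: "appears P m0 d0" by blast
    have M: "{m. \<exists>d. appears P m d} = {k + int q}" using apD a0 by auto
    have D: "{d. \<exists>m. appears P m d} \<subseteq> {..nat (k + int q)}" using apD by force
    have fin: "finite {d. \<exists>m. appears P m d}" using D finite_subset by blast
    have ne: "{d. \<exists>m. appears P m d} \<noteq> {}" using a0 by blast
    have "Max {d. \<exists>m. appears P m d} \<le> nat (k + int q)" using D fin ne by (simp add: subset_iff)
    moreover have "0 \<le> k + int q" using apD[OF a0] by linarith
    ultimately have "real (Max {d. \<exists>m. appears P m d}) \<le> real_of_int (k + int q)" by linarith
    then show ?thesis unfolding P_def[symmetric] ht_def wd_def M using True by simp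
  qed
qed

end
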